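(* For every $n\ge1$ and $i,j\in S$, $(E^n)_{ij}$ equals the probability that the BPME started with population $n$ in environment $i$ halts in $0.j$. Moreover $f(E)=E$, and for every $S\times S$ matrix $M$ with $0\le M\le E$ entrywise, $\lim_{n\to\infty}f^n(M)=E$, where $f^n$ is the $n$-th iterate of $f$ (in particular $\lim_{n\to\infty}f^n(O)=E$ for the zero matrix $O$).
   Context: Let $S$ be a finite set and $P$ the transition matrix of an irreducible Markov chain on $S$. For each $j\in S$ let $(R_{jn})_{n\in\mathbb{N}}$ be a probability distribution on $\mathbb{N}$. Let $(\xi_t^i)_{t\ge1,i\in S}$ be independent with $\mathbb{P}(\xi_t^i=n)=R_{in}$, let $(Q_t)_{t\ge0}$ be a Markov chain with transition matrix $P$ independent of the $\xi$'s, and $\xi_t=\sum_{i}\xi_t^i\mathbf{1}\{Q_t=i\}$. The BPME is $X_{t+1}=X_t-1+\xi_{t+1}$ if $X_t>0$ and $X_{t+1}=0$ if $X_t=0$, with $X_0\ge1$. The process started from $X_0=n$, $Q_0=i$ halts in $0.j$ if $T:=\inf\{t:X_t=0\}$ is finite and $Q_T=j$. The extinction matrix $E$ is the $S\times S$ matrix with $E_{ij}$ the probability that the BPME started from $X_0=1$, $Q_0=i$ halts in $0.j$. For $n\in\mathbb{N}$ let $(P_n)_{ij}=P_{ij}R_{jn}$, and define the matrix generating function $f(M)=\sum_{n\ge0}P_nM^n$ for substochastic $S\times S$ matrices $M$, with $M^0=I$. *)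

theory Defs
  imports "HOL-Analysis.Analysis" "HOL-Probability.Probability"
begin

text \<open>The transition matrix P is given row-wise
  as a kernel P :: 'a => 'a pmf (so P i j = pmf (P i) j), and the offspring laws
  R j are given as R :: 'a => nat pmf (so R j n = pmf (R j) n).\<close>

definition mpow :: "real^'a::finite^'a \<Rightarrow> nat \<Rightarrow> real^'a^'a" where
  "mpow M k = ((\<lambda>A. A ** M) ^^ k) (mat 1)"

definition Pmat :: "('a::finite \<Rightarrow> 'a pmf) \<Rightarrow> real^'a^'a" where
  "Pmat P = (\<chi> i j. pmf (P i) j)"

definition irreducible_chain :: "('a::finite \<Rightarrow> 'a pmf) \<Rightarrow> bool" where
  "irreducible_chain P \<longleftrightarrow> (\<forall>i j. \<exists>k. mpow (Pmat P) k $ i $ j > 0)"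

definition Pn :: "('a::finite \<Rightarrow> 'a pmf) \<Rightarrow> ('a \<Rightarrow> nat pmf) \<Rightarrow> nat \<Rightarrow> real^'a^'a" where
  "Pn P R n = (\<chi> i j. pmf (P i) j * pmf (R j) n)"

definition genf :: "('a::finite \<Rightarrow> 'a pmf) \<Rightarrow> ('a \<Rightarrow> nat pmf) \<Rightarrow> real^'a^'a \<Rightarrow> real^'a^'a" where
  "genf P R M = (\<chi> i j. \<Sum>n. (Pn P R n ** mpow M n) $ i $ j)"

fun Qpath :: "('a \<Rightarrow> 'a pmf) \<Rightarrow> 'a \<Rightarrow> nat \<Rightarrow> 'a list pmf" where
  "Qpath P i 0 = return_pmf [i]"
| "Qpath P i (Suc t) = bind_pmf (Qpath P i t) (\<lambda>qs. map_pmf (\<lambda>q. qs @ [q]) (P (last qs)))"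

definition Xilaw :: "('a::finite \<Rightarrow> nat pmf) \<Rightarrow> nat \<Rightarrow> (nat \<times> 'a \<Rightarrow> nat) pmf" where
  "Xilaw R t = Pi_pmf ({1..t} \<times> UNIV) 0 (\<lambda>(s,k). R k)"

fun Xproc :: "nat \<Rightarrow> 'a list \<Rightarrow> (nat \<times> 'a \<Rightarrow> nat) \<Rightarrow> nat \<Rightarrow> nat" where
  "Xproc n qs xi 0 = n"
| "Xproc n qs xi (Suc s) =
     (if Xproc n qs xi s > 0 then Xproc n qs xi s - 1 + xi (Suc s, qs ! Suc s) else 0)"

definition halted_by :: "nat \<Rightarrow> 'a \<Rightarrow> nat \<Rightarrow> 'a list \<times> (nat \<times> 'a \<Rightarrow> nat) \<Rightarrow> bool" where
  "halted_by n j t \<omega> = (\<exists>T\<le>t. Xproc n (fst \<omega>) (snd \<omega>) T = 0 \<and>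
       (\<forall>s<T. Xproc n (fst \<omega>) (snd \<omega>) s > 0) \<and> fst \<omega> ! T = j)"

definition halt_prob_by :: "('a::finite \<Rightarrow> 'a pmf) \<Rightarrow> ('a \<Rightarrow> nat pmf) \<Rightarrow> nat \<Rightarrow> 'a \<Rightarrow> 'a \<Rightarrow> nat \<Rightarrow> real" where
  "halt_prob_by P R n i j t =
     measure_pmf.prob (pair_pmf (Qpath P i t) (Xilaw R t)) {\<omega>. halted_by n j t \<omega>}"

text \<open>P(T < infinity, Q_T = j) = sup_t P(T <= t, Q_T = j) (continuity from below).\<close>
definition halt_prob :: "('a::finite \<Rightarrow> 'a pmf) \<Rightarrow> ('a \<Rightarrow> nat pmf) \<Rightarrow> nat \<Rightarrow> 'a \<Rightarrow> 'a \<Rightarrow> real" where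
  "halt_prob P R n i j = (SUP t. halt_prob_by P R n i j t)"

definition extinction_matrix :: "('a::finite \<Rightarrow> 'a pmf) \<Rightarrow> ('a \<Rightarrow> nat pmf) \<Rightarrow> real^'a^'a" where
  "extinction_matrix P R = (\<chi> i j. halt_prob P R 1 i j)"

end

theory Submission
  imports Defs
begin

lemma prob_bind_pmf:
  "measure_pmf.prob (bind_pmf M N) X = measure_pmf.expectation M (\<lambda>x. measure_pmf.prob (N x) X)"
proof -
  have "ennreal (measure_pmf.prob (bind_pmf M N) X) = emeasure (measure_pmf (bind_pmf M N)) X"
    by (simp add: measure_pmf.emeasure_eq_measure)
  also have "\<dots> = (\<integral>\<^sup>+x. emeasure (N x) X \<partial>M)" by simp
  also have "\<dots> = (\<integral>\<^sup>+x. ennreal (measure_pmf.prob (N x) X) \<partial>M)"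
    by (simp add: measure_pmf.emeasure_eq_measure)
  also have "\<dots> = ennreal (measure_pmf.expectation M (\<lambda>x. measure_pmf.prob (N x) X))"
    by (intro nn_integral_eq_integral measure_pmf.integrable_const_bound[where B=1]) auto
  finally show ?thesis by (simp add: ennreal_inj)
qed

lemma expectation_nat_pmf:
  fixes R :: "nat pmf" and g :: "nat \<Rightarrow> real"
  assumes "\<And>m. \<bar>g m\<bar> \<le> B"
  shows "measure_pmf.expectation R g = (\<Sum>m. pmf R m * g m)"
proof -
  have int: "integrable (measure_pmf R) g"
    by (intro measure_pmf.integrable_const_bound[where B=B]) (auto simp: assms)
  have "measure_pmf.expectation R g = (LINT m|count_space UNIV. pmf R m * g m)"
    by (simp add: measure_pmf_eq_density integral_density)
  also have "\<dots> = (\<Sum>m. pmf R m * g m)"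
    apply (rule integral_count_space_nat)
    using int by (simp add: measure_pmf_eq_density integrable_density)
  finally show ?thesis .
qed

lemma expectation_finite_pmf:
  fixes M :: "'a::finite pmf" and g :: "'a \<Rightarrow> real"
  shows "measure_pmf.expectation M g = (\<Sum>k\<in>UNIV. pmf M k * g k)"
  by (subst integral_measure_pmf_real[of UNIV]) (auto simp: mult.commute)

fun Xp :: "nat \<Rightarrow> (nat \<Rightarrow> nat) \<Rightarrow> nat \<Rightarrow> nat" where
  "Xp n y 0 = n"
| "Xp n y (Suc s) = (if Xp n y s > 0 then Xp n y s - 1 + y (Suc s) else 0)"

definition HB :: "nat \<Rightarrow> 'a \<Rightarrow> nat \<Rightarrow> 'a list \<times> (nat \<Rightarrow> nat) \<Rightarrow> bool" where
  "HB n j t \<omega> = (\<exists>T\<le>t. Xp n (snd \<omega>) T = 0 \<and> (\<forall>s<T. 0 < Xp n (snd \<omega>) s) \<and> fst \<omega> ! T = j)"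

fun Lapp :: "('a \<Rightarrow> 'a pmf) \<Rightarrow> ('a \<Rightarrow> nat pmf) \<Rightarrow> 'a \<Rightarrow> nat \<Rightarrow> ('a list \<times> (nat \<Rightarrow> nat)) pmf" where
  "Lapp P R i 0 = return_pmf ([i], \<lambda>_. 0)"
| "Lapp P R i (Suc t) = bind_pmf (Lapp P R i t) (\<lambda>(qs,y). bind_pmf (P (last qs))
      (\<lambda>q. map_pmf (\<lambda>m. (qs@[q], y(Suc t := m))) (R q)))"

definition shift :: "nat \<Rightarrow> (nat \<Rightarrow> nat) \<Rightarrow> nat \<Rightarrow> nat" where
  "shift m y = (\<lambda>s. if s = 0 then 0 else if s = Suc 0 then m else y (s - 1))"

lemma Lapp_support: "\<omega> \<in> set_pmf (Lapp P R i t) \<Longrightarrow> fst \<omega> \<noteq> [] \<and> fst \<omega> ! 0 = i"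
proof (induction t arbitrary: \<omega>)
  case 0 then show ?case by simp
next
  case (Suc t)
  then show ?case by (auto simp: nth_append split: prod.splits)
qed

lemma Lapp_prepend:
  "Lapp P R i (Suc t) = bind_pmf (P i) (\<lambda>k. bind_pmf (R k) (\<lambda>m.
      map_pmf (\<lambda>(qs,y). (i#qs, shift m y)) (Lapp P R k t)))"
proof (induction t arbitrary: i)
  case 0
  show ?case
    apply (simp add: map_pmf_def bind_return_pmf bind_assoc_pmf shift_def fun_upd_def)
    apply (intro bind_pmf_cong refl)
    apply (auto simp: fun_eq_iff)
    done
next
  case (Suc t)
  have "Lapp P R i (Suc (Suc t)) = bind_pmf (Lapp P R i (Suc t)) (\<lambda>(qs,y). bind_pmf (P (last qs))
      (\<lambda>q. map_pmf (\<lambda>m. (qs@[q], y(Suc (Suc t) := m))) (R q)))" by simp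
  also have "\<dots> = bind_pmf (P i) (\<lambda>k. bind_pmf (R k) (\<lambda>m. bind_pmf (Lapp P R k t)
      (\<lambda>(qs,y). bind_pmf (P (last (i#qs)))
      (\<lambda>q. map_pmf (\<lambda>m'. ((i#qs)@[q], (shift m y)(Suc (Suc t) := m'))) (R q)))))"
    unfolding Suc.IH by (simp add: bind_assoc_pmf bind_map_pmf case_prod_unfold)
  also have "\<dots> = bind_pmf (P i) (\<lambda>k. bind_pmf (R k) (\<lambda>m. bind_pmf (Lapp P R k t)
      (\<lambda>(qs,y). map_pmf (\<lambda>(qs,y). (i#qs, shift m y)) (bind_pmf (P (last qs))
      (\<lambda>q. map_pmf (\<lambda>m'. (qs@[q], y(Suc t := m'))) (R q))))))"
  proof (intro bind_pmf_cong refl)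
    fix k m \<omega> assume "\<omega> \<in> set_pmf (Lapp P R k t)"
    then have ne: "fst \<omega> \<noteq> []" by (auto dest: Lapp_support)
    have sh: "(shift m y)(Suc (Suc t) := m') = shift m (y(Suc t := m'))" for y m'
      by (auto simp: shift_def fun_eq_iff)
    show "(case \<omega> of (qs, y) \<Rightarrow> bind_pmf (P (last (i#qs)))
      (\<lambda>q. map_pmf (\<lambda>m'. ((i#qs)@[q], (shift m y)(Suc (Suc t) := m'))) (R q))) =
      (case \<omega> of (qs, y) \<Rightarrow> map_pmf (\<lambda>(qs,y). (i#qs, shift m y)) (bind_pmf (P (last qs))
      (\<lambda>q. map_pmf (\<lambda>m'. (qs@[q], y(Suc t := m'))) (R q))))"
      using ne by (auto simp: sh map_bind_pmf pmf.map_comp o_def split: prod.splits)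
  qed
  also have "\<dots> = bind_pmf (P i) (\<lambda>k. bind_pmf (R k) (\<lambda>m.
      map_pmf (\<lambda>(qs,y). (i#qs, shift m y)) (Lapp P R k (Suc t))))"
    by (simp add: map_bind_pmf case_prod_unfold)
  finally show ?case .
qed

definition ymarg :: "('a::finite \<Rightarrow> nat pmf) \<Rightarrow> nat \<Rightarrow> (nat \<Rightarrow> 'a) \<Rightarrow> (nat \<Rightarrow> nat) pmf" where
  "ymarg R t g = map_pmf (\<lambda>xi s. if s \<in> {1..t} then xi (s, g s) else 0) (Xilaw R t)"

lemma ymarg_0: "ymarg R 0 g = return_pmf (\<lambda>_. 0)"
  by (simp add: ymarg_def Xilaw_def)

lemma ymarg_Suc: "ymarg R (Suc t) g =
   map_pmf (\<lambda>(m,y). y(Suc t := m)) (pair_pmf (R (g (Suc t))) (ymarg R t g))"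
proof -
  let ?p = "(\<lambda>(s,k). R k) :: nat \<times> 'a \<Rightarrow> nat pmf"
  let ?A = "{Suc t} \<times> (UNIV :: 'a set)" and ?B = "{1..t} \<times> (UNIV :: 'a set)"
  have eq: "{1..Suc t} \<times> (UNIV :: 'a set) = ?A \<union> ?B" by auto
  have X: "Xilaw R (Suc t) = map_pmf (\<lambda>(f,g) x. if x \<in> ?A then f x else g x)
             (pair_pmf (Pi_pmf ?A 0 ?p) (Pi_pmf ?B 0 ?p))"
    unfolding Xilaw_def eq by (rule Pi_pmf_union) auto
  have comp: "map_pmf (\<lambda>f. f (Suc t, g (Suc t))) (Pi_pmf ?A 0 ?p) = R (g (Suc t))"
    by (subst Pi_pmf_component) auto
  have "ymarg R (Suc t) g = map_pmf (\<lambda>(m,y). y(Suc t := m))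
      (map_pmf (\<lambda>(a,b). (a (Suc t, g (Suc t)), (\<lambda>s. if s \<in> {1..t} then b (s, g s) else 0)))
        (pair_pmf (Pi_pmf ?A 0 ?p) (Pi_pmf ?B 0 ?p)))"
    unfolding ymarg_def X pmf.map_comp o_def
    by (intro map_pmf_cong refl) (auto simp: fun_eq_iff)
  also have "\<dots> = map_pmf (\<lambda>(m,y). y(Suc t := m)) (pair_pmf (R (g (Suc t))) (ymarg R t g))"
    unfolding map_pair comp by (simp add: ymarg_def Xilaw_def)
  finally show ?thesis .
qed

lemma Qpath_support: "qs \<in> set_pmf (Qpath P i t) \<Longrightarrow> length qs = Suc t"
  by (induction t arbitrary: qs) auto

lemma bind_pair_commute:
  "bind_pmf A (\<lambda>q. map_pmf (F q) (pair_pmf (B q) Y)) =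
   bind_pmf Y (\<lambda>y. bind_pmf A (\<lambda>q. map_pmf (\<lambda>m. F q (m,y)) (B q)))"
  unfolding pair_pmf_def map_pmf_def bind_assoc_pmf bind_return_pmf
  apply (subst bind_commute_pmf[of Y])
  apply (intro bind_pmf_cong refl)
  apply (subst bind_commute_pmf[of Y])
  apply simp
  done

lemma Lapp_link: "bind_pmf (Qpath P i t) (\<lambda>qs. map_pmf (Pair qs) (ymarg R t (\<lambda>s. qs ! s))) = Lapp P R i t"
proof (induction t)
  case 0
  then show ?case by (simp add: ymarg_0 map_pmf_def bind_return_pmf)
next
  case (Suc t)
  have "bind_pmf (Qpath P i (Suc t)) (\<lambda>qs. map_pmf (Pair qs) (ymarg R (Suc t) (\<lambda>s. qs ! s)))
    = bind_pmf (Qpath P i t) (\<lambda>qs. bind_pmf (P (last qs)) (\<lambda>q.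
        map_pmf (Pair (qs@[q])) (ymarg R (Suc t) (\<lambda>s. (qs@[q]) ! s))))"
    by (simp add: bind_assoc_pmf bind_map_pmf)
  also have "\<dots> = bind_pmf (Qpath P i t) (\<lambda>qs. bind_pmf (P (last qs)) (\<lambda>q.
        map_pmf (\<lambda>(m,y). (qs@[q], y(Suc t := m))) (pair_pmf (R q) (ymarg R t (\<lambda>s. qs ! s)))))"
  proof (intro bind_pmf_cong refl)
    fix qs q assume qs: "qs \<in> set_pmf (Qpath P i t)"
    then have len: "length qs = Suc t" by (rule Qpath_support)
    have "ymarg R t (\<lambda>s. (qs@[q]) ! s) = ymarg R t (\<lambda>s. qs ! s)"
      unfolding ymarg_def using len by (intro map_pmf_cong refl) (auto simp: fun_eq_iff nth_append)
    then show "map_pmf (Pair (qs@[q])) (ymarg R (Suc t) (\<lambda>s. (qs@[q]) ! s)) =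
        map_pmf (\<lambda>(m,y). (qs@[q], y(Suc t := m))) (pair_pmf (R q) (ymarg R t (\<lambda>s. qs ! s)))"
      using len by (simp add: ymarg_Suc pmf.map_comp o_def case_prod_unfold nth_append)
  qed
  also have "\<dots> = bind_pmf (Qpath P i t) (\<lambda>qs. bind_pmf (ymarg R t (\<lambda>s. qs ! s)) (\<lambda>y.
       bind_pmf (P (last qs)) (\<lambda>q. map_pmf (\<lambda>m. (qs@[q], y(Suc t := m))) (R q))))"
    by (intro bind_pmf_cong refl, subst bind_pair_commute) simp
  also have "\<dots> = Lapp P R i (Suc t)"
    by (simp add: Suc.IH[symmetric] bind_assoc_pmf bind_map_pmf)
  finally show ?case .
qed

lemma Xproc_Xp: "s \<le> t \<Longrightarrow> Xproc n qs xi s = Xp n (\<lambda>s. if s \<in> {1..t} then xi (s, qs ! s) else 0) s"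
  by (induction s) auto

lemma halted_HB: "halted_by n j t \<omega> =
   HB n j t ((\<lambda>(qs,xi). (qs, \<lambda>s. if s \<in> {1..t} then xi (s, qs ! s) else 0)) \<omega>)"
proof (cases \<omega>)
  case (Pair qs xi)
  let ?y = "\<lambda>s. if s \<in> {1..t} then xi (s, qs ! s) else 0"
  have eq: "\<And>s. s \<le> t \<Longrightarrow> Xproc n qs xi s = Xp n ?y s" by (rule Xproc_Xp)
  have "(\<exists>T\<le>t. Xproc n qs xi T = 0 \<and> (\<forall>s<T. Xproc n qs xi s > 0) \<and> qs ! T = j) \<longleftrightarrow>
        (\<exists>T\<le>t. Xp n ?y T = 0 \<and> (\<forall>s<T. 0 < Xp n ?y s) \<and> qs ! T = j)"
  proof (intro iffI; elim exE conjE)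
    fix T assume T: "T \<le> t" "Xproc n qs xi T = 0" "\<forall>s<T. Xproc n qs xi s > 0" "qs ! T = j"
    show "\<exists>T\<le>t. Xp n ?y T = 0 \<and> (\<forall>s<T. 0 < Xp n ?y s) \<and> qs ! T = j"
      apply (rule exI[of _ T])
      using T eq[of T] eq by (auto simp del: Xp.simps)
  next
    fix T assume T: "T \<le> t" "Xp n ?y T = 0" "\<forall>s<T. 0 < Xp n ?y s" "qs ! T = j"
    show "\<exists>T\<le>t. Xproc n qs xi T = 0 \<and> (\<forall>s<T. Xproc n qs xi s > 0) \<and> qs ! T = j"
      apply (rule exI[of _ T])
      using T eq[of T] eq by (auto simp del: Xp.simps Xproc.simps)
  qed
  then show ?thesis unfolding halted_by_def HB_def Pair by simp
qed

definition h :: "('a::finite \<Rightarrow> 'a pmf) \<Rightarrow> ('a \<Rightarrow> nat pmf) \<Rightarrow> nat \<Rightarrow> nat \<Rightarrow> 'a \<Rightarrow> 'a \<Rightarrow> real" where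
  "h P R t n i j = measure_pmf.prob (Lapp P R i t) {\<omega>. HB n j t \<omega>}"

lemma halt_prob_by_h: "halt_prob_by P R n i j t = h P R t n i j"
proof -
  let ?phi = "(\<lambda>(qs,xi). (qs, \<lambda>s. if s \<in> {1..t} then xi (s, qs ! s) else 0)) :: 'a list \<times> (nat \<times> 'a \<Rightarrow> nat) \<Rightarrow> _"
  have mp: "map_pmf ?phi (pair_pmf (Qpath P i t) (Xilaw R t)) = Lapp P R i t"
    unfolding Lapp_link[symmetric, where P=P and i=i and t=t and R=R] pair_pmf_def ymarg_def
    by (simp add: map_bind_pmf bind_map_pmf bind_return_pmf map_pmf_def[symmetric] pmf.map_comp o_def)
  have "\<And>\<omega>. halted_by n j t \<omega> = HB n j t (?phi \<omega>)" by (rule halted_HB)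
  then have eq2: "{\<omega>. halted_by n j t \<omega>} = ?phi -` {\<omega>. HB n j t \<omega>}" by blast
  have "measure_pmf.prob (pair_pmf (Qpath P i t) (Xilaw R t)) (?phi -` {\<omega>. HB n j t \<omega>}) =
        measure_pmf.prob (map_pmf ?phi (pair_pmf (Qpath P i t) (Xilaw R t))) {\<omega>. HB n j t \<omega>}"
    by (rule measure_map_pmf[symmetric])
  then show ?thesis
    unfolding halt_prob_by_def h_def eq2 mp .
qed

lemma h_nonneg: "0 \<le> h P R t n i j" by (simp add: h_def)
lemma h_le1: "h P R t n i j \<le> 1" by (simp add: h_def)

lemma HB_0: "HB 0 j t \<omega> \<longleftrightarrow> fst \<omega> ! 0 = j"
  unfolding HB_def by (auto intro: exI[of _ 0])

lemma measure_pmf_cong_set: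
  assumes "\<And>x. x \<in> set_pmf p \<Longrightarrow> x \<in> A \<longleftrightarrow> x \<in> B"
  shows "measure_pmf.prob p A = measure_pmf.prob p B"
  using assms by (intro measure_prob_cong_0) (auto simp: set_pmf_iff)

lemma h_0: "h P R t 0 i j = (if i = j then 1 else 0)"
proof -
  have "h P R t 0 i j = measure_pmf.prob (Lapp P R i t) (if i = j then UNIV else {})"
    unfolding h_def by (intro measure_pmf_cong_set) (auto simp: HB_0 dest: Lapp_support)
  then show ?thesis by (simp add: measure_pmf.prob_space)
qed

lemma h_Suc_0: "h P R 0 (Suc n) i j = 0"
  by (simp add: h_def HB_def)

lemma Xp_shift: "Xp (Suc n) (shift m y) (Suc s) = Xp (n + m) y s"
  by (induction s) (auto simp: shift_def)

lemma HB_shift: "HB (Suc n) j (Suc t) (i#qs, shift m y) \<longleftrightarrow> HB (n + m) j t (qs, y)"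
proof
  assume "HB (Suc n) j (Suc t) (i#qs, shift m y)"
  then obtain T where T: "T \<le> Suc t" "Xp (Suc n) (shift m y) T = 0"
    "\<forall>s<T. 0 < Xp (Suc n) (shift m y) s" "(i#qs) ! T = j" unfolding HB_def by auto
  then obtain T' where T': "T = Suc T'" by (cases T) auto
  show "HB (n + m) j t (qs, y)" unfolding HB_def
  proof (intro exI[of _ T'] conjI allI impI)
    show "T' \<le> t" using T T' by simp
    show "Xp (n + m) (snd (qs, y)) T' = 0" using T(2) T' by (simp del: Xp.simps add: Xp_shift)
    show "fst (qs, y) ! T' = j" using T(4) T' by simp
    fix s assume "s < T'"
    then have "0 < Xp (Suc n) (shift m y) (Suc s)" using T(3) T' by blast
    then show "0 < Xp (n + m) (snd (qs, y)) s" by (simp del: Xp.simps add: Xp_shift)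
  qed
next
  assume "HB (n + m) j t (qs, y)"
  then obtain T where T: "T \<le> t" "Xp (n+m) y T = 0"
    "\<forall>s<T. 0 < Xp (n+m) y s" "qs ! T = j" unfolding HB_def by auto
  show "HB (Suc n) j (Suc t) (i#qs, shift m y)" unfolding HB_def
  proof (intro exI[of _ "Suc T"] conjI allI impI)
    show "Suc T \<le> Suc t" using T by simp
    show "Xp (Suc n) (snd (i # qs, shift m y)) (Suc T) = 0" using T(2) by (simp del: Xp.simps add: Xp_shift)
    show "fst (i # qs, shift m y) ! Suc T = j" using T(4) by simp
    fix s assume "s < Suc T"
    then show "0 < Xp (Suc n) (snd (i # qs, shift m y)) s"
    proof (cases s)
      case 0 then show ?thesis by simp
    next
      case (Suc s')
      then have "s' < T" using \<open>s < Suc T\<close> by simp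
      then have "0 < Xp (n+m) y s'" using T(3) by blast
      then show ?thesis using Suc by (simp only: snd_conv Xp_shift)
    qed
  qed
qed

lemma h_Suc_Suc: "h P R (Suc t) (Suc n) i j =
   (\<Sum>k\<in>UNIV. pmf (P i) k * (\<Sum>m. pmf (R k) m * h P R t (n + m) k j))"
proof -
  have pre: "(\<lambda>(qs,y). (i#qs, shift m y)) -` {\<omega>. HB (Suc n) j (Suc t) \<omega>} = {\<omega>. HB (n+m) j t \<omega>}" for m
  proof -
    have "\<And>qs y. HB (Suc n) j (Suc t) (i#qs, shift m y) \<longleftrightarrow> HB (n + m) j t (qs, y)" by (rule HB_shift)
    then show ?thesis by auto
  qed
  have "h P R (Suc t) (Suc n) i j = measure_pmf.expectation (P i) (\<lambda>k.
      measure_pmf.expectation (R k) (\<lambda>m. h P R t (n + m) k j))"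
    unfolding h_def Lapp_prepend prob_bind_pmf measure_map_pmf pre ..
  also have "\<dots> = (\<Sum>k\<in>UNIV. pmf (P i) k * (\<Sum>m. pmf (R k) m * h P R t (n + m) k j))"
    by (simp add: expectation_finite_pmf expectation_nat_pmf[where B=1] h_nonneg h_le1)
  finally show ?thesis .
qed

lemma summable_pmf_nat: "summable (\<lambda>m. pmf (R::nat pmf) m)"
proof -
  have "integrable (count_space UNIV) (pmf R)" by (rule integrable_pmf)
  then have "summable (\<lambda>m. norm (pmf R m))" by (simp add: integrable_count_space_nat_iff)
  then show ?thesis by simp
qed

lemma summable_pmf_bounded:
  fixes g :: "nat \<Rightarrow> real"
  assumes "\<And>m. \<bar>g m\<bar> \<le> C"
  shows "summable (\<lambda>m. pmf (R::nat pmf) m * g m)"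
proof (rule summable_comparison_test[where g="\<lambda>m. pmf R m * C"])
  show "summable (\<lambda>m. pmf R m * C)" by (intro summable_mult2 summable_pmf_nat)
  show "\<exists>N. \<forall>n\<ge>N. norm (pmf R n * g n) \<le> pmf R n * C"
    using assms by (auto simp: abs_mult intro!: mult_left_mono)
qed

lemma swap3:
  fixes A :: "nat \<Rightarrow> 's::finite \<Rightarrow> 's \<Rightarrow> real" and B :: "'s \<Rightarrow> real"
  assumes "\<And>m k' k. \<bar>A m k' k\<bar> \<le> 1" "\<And>k. \<bar>B k\<bar> \<le> 1"
  shows "(\<Sum>k'\<in>UNIV. pmf (P i) k' * (\<Sum>m. pmf (R k') m * (\<Sum>k\<in>UNIV. A m k' k * B k))) =
         (\<Sum>k\<in>UNIV. (\<Sum>k'\<in>UNIV. pmf (P i) k' * (\<Sum>m. pmf (R k') m * A m k' k)) * B k)"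
proof -
  have inner: "(\<Sum>m. pmf (R k') m * (\<Sum>k\<in>UNIV. A m k' k * B k)) =
        (\<Sum>k\<in>UNIV. (\<Sum>m. pmf (R k') m * A m k' k) * B k)" for k'
  proof -
    have "(\<Sum>m. pmf (R k') m * (\<Sum>k\<in>UNIV. A m k' k * B k)) =
          (\<Sum>m. \<Sum>k\<in>UNIV. pmf (R k') m * (A m k' k * B k))"
      by (simp add: sum_distrib_left)
    also have "\<dots> = (\<Sum>k\<in>UNIV. \<Sum>m. pmf (R k') m * (A m k' k * B k))"
    proof (rule suminf_sum)
      fix k show "summable (\<lambda>m. pmf (R k') m * (A m k' k * B k))"
      proof (rule summable_pmf_bounded[where C=1])
        fix m have "\<bar>A m k' k\<bar> * \<bar>B k\<bar> \<le> 1 * 1"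
          using assms by (intro mult_mono) auto
        then show "\<bar>A m k' k * B k\<bar> \<le> 1" by (simp add: abs_mult)
      qed
    qed
    also have "\<dots> = (\<Sum>k\<in>UNIV. (\<Sum>m. pmf (R k') m * A m k' k) * B k)"
    proof (rule sum.cong[OF refl])
      fix k
      have "summable (\<lambda>m. pmf (R k') m * A m k' k)"
        using assms by (intro summable_pmf_bounded[where C=1]) auto
      then show "(\<Sum>m. pmf (R k') m * (A m k' k * B k)) = (\<Sum>m. pmf (R k') m * A m k' k) * B k"
        by (subst suminf_mult2) (auto simp: mult.assoc)
    qed
    finally show ?thesis .
  qed
  have "(\<Sum>k'\<in>UNIV. pmf (P i) k' * (\<Sum>k\<in>UNIV. (\<Sum>m. pmf (R k') m * A m k' k) * B k)) =
        (\<Sum>k'\<in>UNIV. \<Sum>k\<in>UNIV. pmf (P i) k' * ((\<Sum>m. pmf (R k') m * A m k' k) * B k))"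
    by (simp add: sum_distrib_left)
  also have "\<dots> = (\<Sum>k\<in>UNIV. \<Sum>k'\<in>UNIV. pmf (P i) k' * ((\<Sum>m. pmf (R k') m * A m k' k) * B k))"
    by (rule sum.swap)
  also have "\<dots> = (\<Sum>k\<in>UNIV. (\<Sum>k'\<in>UNIV. pmf (P i) k' * (\<Sum>m. pmf (R k') m * A m k' k)) * B k)"
    by (simp add: sum_distrib_right mult.assoc)
  finally show ?thesis unfolding inner .
qed

context
  fixes P :: "'s::finite \<Rightarrow> 's pmf" and R :: "'s \<Rightarrow> nat pmf"
begin

abbreviation "H \<equiv> h P R"

lemma H_abs: "\<bar>H t n i j\<bar> \<le> 1"
  using h_nonneg[of P R t n i j] h_le1[of P R t n i j] by simp

lemma H_mono_Suc: "H t n i j \<le> H (Suc t) n i j"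
proof (induction t arbitrary: n i j)
  case 0
  then show ?case by (cases n) (auto simp: h_0 h_Suc_0 h_nonneg)
next
  case (Suc t)
  show ?case
  proof (cases n)
    case 0 then show ?thesis by (simp add: h_0)
  next
    case (Suc n')
    have "(\<Sum>m. pmf (R k) m * H t (n' + m) k j) \<le> (\<Sum>m. pmf (R k) m * H (Suc t) (n' + m) k j)" for k
    proof (rule suminf_le)
      show "\<And>m. pmf (R k) m * H t (n' + m) k j \<le> pmf (R k) m * H (Suc t) (n' + m) k j"
        by (intro mult_left_mono Suc.IH) auto
      show "summable (\<lambda>m. pmf (R k) m * H t (n' + m) k j)"
        by (intro summable_pmf_bounded[where C=1] H_abs)
      show "summable (\<lambda>m. pmf (R k) m * H (Suc t) (n' + m) k j)"
        by (intro summable_pmf_bounded[where C=1] H_abs)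
    qed
    then show ?thesis unfolding Suc h_Suc_Suc
      by (intro sum_mono mult_left_mono) auto
  qed
qed

lemma H_mono: "t \<le> t' \<Longrightarrow> H t n i j \<le> H t' n i j"
  by (induction rule: dec_induct) (auto intro: order_trans H_mono_Suc)

lemma sum_prod_bound:
  fixes x y :: "'s \<Rightarrow> real"
  assumes "\<And>k. \<bar>x k\<bar> \<le> 1" "\<And>k. \<bar>y k\<bar> \<le> 1"
  shows "\<bar>\<Sum>k\<in>UNIV. x k * y k\<bar> \<le> real CARD('s)"
proof -
  have "\<bar>\<Sum>k\<in>UNIV. x k * y k\<bar> \<le> (\<Sum>k\<in>UNIV. \<bar>x k * y k\<bar>)" by (rule sum_abs)
  also have "\<dots> \<le> (\<Sum>k\<in>(UNIV::'s set). 1)"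
  proof (rule sum_mono)
    fix k have "\<bar>x k\<bar> * \<bar>y k\<bar> \<le> 1 * 1" using assms by (intro mult_mono) auto
    then show "\<bar>x k * y k\<bar> \<le> 1" by (simp add: abs_mult)
  qed
  finally show ?thesis by simp
qed

lemma H_delta: "(\<Sum>k\<in>UNIV. H t 0 i k * X k) = X i"
proof -
  have "\<And>k. H t 0 i k * X k = (if i = k then X k else 0)" by (simp add: h_0)
  then show ?thesis by simp
qed

lemma H_sub: "H t (a + b) i j \<le> (\<Sum>k\<in>UNIV. H t a i k * H t b k j)"
proof (induction t arbitrary: a i j)
  case 0
  show ?case
  proof (cases a)
    case 0 then show ?thesis by (simp add: H_delta)
  next
    case (Suc a')
    then show ?thesis by (simp add: h_Suc_0 h_nonneg sum_nonneg)
  qed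
next
  case (Suc t)
  show ?case
  proof (cases a)
    case 0 then show ?thesis by (simp add: H_delta)
  next
    case (Suc a')
    have "H (Suc t) (a + b) i j = (\<Sum>k'\<in>UNIV. pmf (P i) k' * (\<Sum>m. pmf (R k') m * H t (a' + b + m) k' j))"
      using Suc by (simp add: h_Suc_Suc)
    also have "\<dots> \<le> (\<Sum>k'\<in>UNIV. pmf (P i) k' * (\<Sum>m. pmf (R k') m *
        (\<Sum>k\<in>UNIV. H t (a' + m) k' k * H (Suc t) b k j)))"
    proof -
      have "(\<Sum>m. pmf (R k') m * H t (a' + b + m) k' j) \<le>
            (\<Sum>m. pmf (R k') m * (\<Sum>k\<in>UNIV. H t (a' + m) k' k * H (Suc t) b k j))" for k'
      proof (rule suminf_le)
        fix m
        have "H t (a' + m + b) k' j \<le> (\<Sum>k\<in>UNIV. H t (a' + m) k' k * H t b k j)" by (rule Suc.IH)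
        also have "\<dots> \<le> (\<Sum>k\<in>UNIV. H t (a' + m) k' k * H (Suc t) b k j)"
          by (intro sum_mono mult_left_mono H_mono_Suc h_nonneg)
        finally show "pmf (R k') m * H t (a' + b + m) k' j \<le>
            pmf (R k') m * (\<Sum>k\<in>UNIV. H t (a' + m) k' k * H (Suc t) b k j)"
          by (intro mult_left_mono) (auto simp: ac_simps)
      next
        show "summable (\<lambda>m. pmf (R k') m * H t (a' + b + m) k' j)"
          by (intro summable_pmf_bounded[where C=1] H_abs)
        show "summable (\<lambda>m. pmf (R k') m * (\<Sum>k\<in>UNIV. H t (a' + m) k' k * H (Suc t) b k j))"
          by (intro summable_pmf_bounded[where C="real CARD('s)"] sum_prod_bound H_abs)
      qed
      then show ?thesis by (intro sum_mono mult_left_mono) auto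
    qed
    also have "\<dots> = (\<Sum>k\<in>UNIV. (\<Sum>k'\<in>UNIV. pmf (P i) k' * (\<Sum>m. pmf (R k') m * H t (a' + m) k' k)) * H (Suc t) b k j)"
      by (intro swap3 H_abs)
    also have "\<dots> = (\<Sum>k\<in>UNIV. H (Suc t) a i k * H (Suc t) b k j)"
      using Suc by (simp add: h_Suc_Suc)
    finally show ?thesis .
  qed
qed

lemma H_super: "(\<Sum>k\<in>UNIV. H t a i k * H t' b k j) \<le> H (t + t') (a + b) i j"
proof (induction t arbitrary: a i j)
  case 0
  show ?case
  proof (cases a)
    case 0 then show ?thesis by (simp add: H_delta)
  next
    case (Suc a')
    then show ?thesis by (simp add: h_Suc_0 h_nonneg)
  qed
next
  case (Suc t)
  show ?case
  proof (cases a)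
    case 0 then show ?thesis by (simp add: H_delta H_mono)
  next
    case (Suc a')
    have "(\<Sum>k\<in>UNIV. H (Suc t) a i k * H t' b k j) =
        (\<Sum>k\<in>UNIV. (\<Sum>k'\<in>UNIV. pmf (P i) k' * (\<Sum>m. pmf (R k') m * H t (a' + m) k' k)) * H t' b k j)"
      using Suc by (simp add: h_Suc_Suc)
    also have "\<dots> = (\<Sum>k'\<in>UNIV. pmf (P i) k' * (\<Sum>m. pmf (R k') m *
        (\<Sum>k\<in>UNIV. H t (a' + m) k' k * H t' b k j)))"
      by (intro swap3[symmetric] H_abs)
    also have "\<dots> \<le> (\<Sum>k'\<in>UNIV. pmf (P i) k' * (\<Sum>m. pmf (R k') m * H (t + t') (a' + b + m) k' j))"
    proof -
      have "(\<Sum>m. pmf (R k') m * (\<Sum>k\<in>UNIV. H t (a' + m) k' k * H t' b k j)) \<le>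
            (\<Sum>m. pmf (R k') m * H (t + t') (a' + b + m) k' j)" for k'
      proof (rule suminf_le)
        fix m
        have "(\<Sum>k\<in>UNIV. H t (a' + m) k' k * H t' b k j) \<le> H (t + t') (a' + m + b) k' j" by (rule Suc.IH)
        then show "pmf (R k') m * (\<Sum>k\<in>UNIV. H t (a' + m) k' k * H t' b k j) \<le>
            pmf (R k') m * H (t + t') (a' + b + m) k' j"
          by (intro mult_left_mono) (auto simp: ac_simps)
      next
        show "summable (\<lambda>m. pmf (R k') m * H (t + t') (a' + b + m) k' j)"
          by (intro summable_pmf_bounded[where C=1] H_abs)
        show "summable (\<lambda>m. pmf (R k') m * (\<Sum>k\<in>UNIV. H t (a' + m) k' k * H t' b k j))"
          by (intro summable_pmf_bounded[where C="real CARD('s)"] sum_prod_bound H_abs)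
      qed
      then show ?thesis by (intro sum_mono mult_left_mono) auto
    qed
    also have "\<dots> = H (Suc t + t') (a + b) i j"
      using Suc by (simp add: h_Suc_Suc)
    finally show ?thesis .
  qed
qed

end

definition Hinf :: "('a::finite \<Rightarrow> 'a pmf) \<Rightarrow> ('a \<Rightarrow> nat pmf) \<Rightarrow> nat \<Rightarrow> 'a \<Rightarrow> 'a \<Rightarrow> real" where
  "Hinf P R n i j = (SUP t. h P R t n i j)"

lemma mpow_Suc: "mpow M (Suc n) = mpow M n ** M" by (simp add: mpow_def)
lemma mpow_0: "mpow M 0 = mat 1" by (simp add: mpow_def)

lemma genf_entry: "genf P R M $ i $ j = (\<Sum>n. \<Sum>k\<in>UNIV. pmf (P i) k * (pmf (R k) n * mpow M n $ k $ j))"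
  by (simp add: genf_def Pn_def matrix_matrix_mult_def mult.assoc)

context
  fixes P :: "'s::finite \<Rightarrow> 's pmf" and R :: "'s \<Rightarrow> nat pmf"
begin

abbreviation "HH \<equiv> h P R"

lemma H_bdd: "bdd_above (range (\<lambda>t. HH t n i j))"
  using h_le1 by (intro bdd_aboveI[of _ 1]) auto

lemma H_lim: "(\<lambda>t. HH t n i j) \<longlonglongrightarrow> Hinf P R n i j"
  unfolding Hinf_def by (rule LIMSEQ_incseq_SUP[OF H_bdd]) (simp add: incseq_def H_mono)

lemma H_le_Hinf: "HH t n i j \<le> Hinf P R n i j"
  unfolding Hinf_def by (rule cSUP_upper[OF _ H_bdd]) simp

lemma Hinf_nonneg: "0 \<le> Hinf P R n i j"
  using h_nonneg H_le_Hinf order_trans by blast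

lemma Hinf_le1: "Hinf P R n i j \<le> 1"
  unfolding Hinf_def by (rule cSUP_least) (auto simp: h_le1)

lemma Hinf_abs: "\<bar>Hinf P R n i j\<bar> \<le> 1"
  using Hinf_nonneg Hinf_le1 by (simp add: abs_le_iff)

lemma Hinf_0: "Hinf P R 0 i j = (if i = j then 1 else 0)"
  unfolding Hinf_def h_0 by simp

lemma Hinf_mult: "Hinf P R (a + b) i j = (\<Sum>k\<in>UNIV. Hinf P R a i k * Hinf P R b k j)"
proof -
  have L: "(\<lambda>t. \<Sum>k\<in>UNIV. HH t a i k * HH t b k j) \<longlonglongrightarrow> (\<Sum>k\<in>UNIV. Hinf P R a i k * Hinf P R b k j)"
    by (intro tendsto_sum tendsto_mult H_lim)
  have "Hinf P R (a + b) i j \<le> (\<Sum>k\<in>UNIV. Hinf P R a i k * Hinf P R b k j)"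
    by (rule LIMSEQ_le[OF H_lim L]) (auto intro: H_sub)
  moreover have "(\<Sum>k\<in>UNIV. Hinf P R a i k * Hinf P R b k j) \<le> Hinf P R (a + b) i j"
  proof (rule LIMSEQ_le_const2[OF L], intro exI allI impI)
    fix t
    show "(\<Sum>k\<in>UNIV. HH t a i k * HH t b k j) \<le> Hinf P R (a + b) i j"
      using H_super[where P=P and R=R and t=t and a=a and i=i and t'=t and b=b and j=j] H_le_Hinf[of "t + t" "a + b" i j] by linarith
  qed
  ultimately show ?thesis by linarith
qed

lemma E_entry: "extinction_matrix P R $ i $ j = Hinf P R 1 i j"
  by (simp add: extinction_matrix_def halt_prob_def halt_prob_by_h Hinf_def)

lemma halt_prob_Hinf: "halt_prob P R n i j = Hinf P R n i j"
  by (simp add: halt_prob_def halt_prob_by_h Hinf_def)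

lemma mpow_E: "mpow (extinction_matrix P R) n $ i $ j = Hinf P R n i j"
proof (induction n arbitrary: i j)
  case 0
  then show ?case by (simp add: mpow_0 mat_def Hinf_0)
next
  case (Suc n)
  show ?case
    using Hinf_mult[of n 1 i j]
    by (simp add: mpow_Suc matrix_matrix_mult_def Suc.IH E_entry)
qed

lemma Hinf_1_rec: "Hinf P R 1 i j = (\<Sum>k\<in>UNIV. pmf (P i) k * (\<Sum>m. pmf (R k) m * Hinf P R m k j))"
  (is "_ = ?S")
proof (rule antisym)
  have summ: "summable (\<lambda>m. pmf (R k) m * Hinf P R m k j)" for k
    by (intro summable_pmf_bounded[where C=1] Hinf_abs)
  have Snn: "0 \<le> ?S"
    by (intro sum_nonneg mult_nonneg_nonneg suminf_nonneg summ) (auto intro: Hinf_nonneg)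
  have le: "HH t 1 i j \<le> ?S" for t
  proof (cases t)
    case 0 then show ?thesis using Snn h_Suc_0[of P R 0 i j] by simp
  next
    case (Suc t')
    have "(\<Sum>m. pmf (R k) m * HH t' m k j) \<le> (\<Sum>m. pmf (R k) m * Hinf P R m k j)" for k
      by (intro suminf_le summ summable_pmf_bounded[where C=1] H_abs mult_left_mono H_le_Hinf) auto
    then have "(\<Sum>k\<in>UNIV. pmf (P i) k * (\<Sum>m. pmf (R k) m * HH t' m k j)) \<le> ?S"
      by (intro sum_mono mult_left_mono) auto
    then show ?thesis unfolding Suc using h_Suc_Suc[of P R t' 0 i j] by simp
  qed
  have "(SUP t. HH t 1 i j) \<le> ?S" by (intro cSUP_least le) auto
  then show "Hinf P R 1 i j \<le> ?S" by (simp only: Hinf_def[of P R 1 i j])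
  define T where "T N = (\<Sum>k\<in>UNIV. pmf (P i) k * (\<Sum>m<N. pmf (R k) m * Hinf P R m k j))" for N
  have TN: "T N \<le> Hinf P R 1 i j" for N
  proof -
    have L: "(\<lambda>t. \<Sum>k\<in>UNIV. pmf (P i) k * (\<Sum>m<N. pmf (R k) m * HH t m k j)) \<longlonglongrightarrow> T N"
      unfolding T_def by (intro tendsto_sum tendsto_mult tendsto_const H_lim)
    show ?thesis
    proof (rule LIMSEQ_le_const2[OF L], intro exI allI impI)
      fix t
      have "(\<Sum>m<N. pmf (R k) m * HH t m k j) \<le> (\<Sum>m. pmf (R k) m * HH t m k j)" for k
        by (intro sum_le_suminf summable_pmf_bounded[where C=1] H_abs) (auto intro!: mult_nonneg_nonneg h_nonneg)
      then have "(\<Sum>k\<in>UNIV. pmf (P i) k * (\<Sum>m<N. pmf (R k) m * HH t m k j)) \<le>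
          (\<Sum>k\<in>UNIV. pmf (P i) k * (\<Sum>m. pmf (R k) m * HH t m k j))"
        by (intro sum_mono mult_left_mono) auto
      also have "\<dots> = HH (Suc t) 1 i j" using h_Suc_Suc[of P R t 0 i j] by simp
      also have "\<dots> \<le> Hinf P R 1 i j" by (rule H_le_Hinf)
      finally show "(\<Sum>k\<in>UNIV. pmf (P i) k * (\<Sum>m<N. pmf (R k) m * HH t m k j)) \<le> Hinf P R 1 i j" .
    qed
  qed
  have "T \<longlonglongrightarrow> ?S"
    unfolding T_def by (intro tendsto_sum tendsto_mult tendsto_const summable_LIMSEQ summ)
  then show "?S \<le> Hinf P R 1 i j"
    by (rule LIMSEQ_le_const2) (use TN in blast)
qed

lemma genf_E: "genf P R (extinction_matrix P R) = extinction_matrix P R"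
proof -
  have "genf P R (extinction_matrix P R) $ i $ j = extinction_matrix P R $ i $ j" for i j
  proof -
    have "genf P R (extinction_matrix P R) $ i $ j =
        (\<Sum>n. \<Sum>k\<in>UNIV. pmf (P i) k * (pmf (R k) n * Hinf P R n k j))"
      by (simp add: genf_entry mpow_E)
    also have "\<dots> = (\<Sum>k\<in>UNIV. \<Sum>n. pmf (P i) k * (pmf (R k) n * Hinf P R n k j))"
      by (intro suminf_sum summable_mult summable_pmf_bounded[where C=1] Hinf_abs)
    also have "\<dots> = (\<Sum>k\<in>UNIV. pmf (P i) k * (\<Sum>n. pmf (R k) n * Hinf P R n k j))"
    proof (intro sum.cong refl)
      fix k
      have "summable (\<lambda>n. pmf (R k) n * Hinf P R n k j)"
        by (intro summable_pmf_bounded[where C=1] Hinf_abs)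
      then show "(\<Sum>n. pmf (P i) k * (pmf (R k) n * Hinf P R n k j)) = pmf (P i) k * (\<Sum>n. pmf (R k) n * Hinf P R n k j)"
        by (rule suminf_mult)
    qed
    also have "\<dots> = extinction_matrix P R $ i $ j"
      by (simp only: E_entry Hinf_1_rec)
    finally show ?thesis .
  qed
  then show ?thesis by (simp add: vec_eq_iff)
qed

end

lemma swap_sum:
  fixes X :: "nat \<Rightarrow> 's::finite \<Rightarrow> real"
  assumes "\<And>n k. \<bar>X n k\<bar> \<le> 1"
  shows "(\<Sum>n. \<Sum>k\<in>UNIV. pmf (P i) k * (pmf (R k) n * X n k)) =
         (\<Sum>k\<in>UNIV. pmf (P i) k * (\<Sum>n. pmf (R k) n * X n k))"
proof -
  have s: "summable (\<lambda>n. pmf (R k) n * X n k)" for k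
    by (intro summable_pmf_bounded[where C=1] assms)
  have "(\<Sum>n. \<Sum>k\<in>UNIV. pmf (P i) k * (pmf (R k) n * X n k)) =
        (\<Sum>k\<in>UNIV. \<Sum>n. pmf (P i) k * (pmf (R k) n * X n k))"
    by (intro suminf_sum summable_mult s)
  also have "\<dots> = (\<Sum>k\<in>UNIV. pmf (P i) k * (\<Sum>n. pmf (R k) n * X n k))"
  proof (intro sum.cong refl)
    fix k show "(\<Sum>n. pmf (P i) k * (pmf (R k) n * X n k)) = pmf (P i) k * (\<Sum>n. pmf (R k) n * X n k)"
      using s by (rule suminf_mult)
  qed
  finally show ?thesis .
qed

lemma genf_summ:
  fixes X :: "nat \<Rightarrow> 's::finite \<Rightarrow> real"
  assumes "\<And>n k. \<bar>X n k\<bar> \<le> 1"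
  shows "summable (\<lambda>n. \<Sum>k\<in>UNIV. pmf (P i) k * (pmf (R k) n * X n k))"
  by (intro summable_sum summable_mult summable_pmf_bounded[where C=1] assms)

lemma mpow_mono:
  fixes A B :: "real^'s::finite^'s"
  assumes "\<And>i j. 0 \<le> A$i$j" "\<And>i j. A$i$j \<le> B$i$j"
  shows "0 \<le> mpow A n $i$j \<and> mpow A n $i$j \<le> mpow B n $i$j"
proof (induction n arbitrary: i j)
  case 0
  then show ?case by (simp add: mpow_0 mat_def)
next
  case (Suc n)
  have "0 \<le> (\<Sum>k\<in>UNIV. mpow A n $ i $ k * A $ k $ j)"
    using Suc.IH assms by (intro sum_nonneg mult_nonneg_nonneg) auto
  moreover have "(\<Sum>k\<in>UNIV. mpow A n $ i $ k * A $ k $ j) \<le> (\<Sum>k\<in>UNIV. mpow B n $ i $ k * B $ k $ j)"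
    using Suc.IH assms by (intro sum_mono mult_mono) (auto intro: order_trans)
  ultimately show ?case by (simp add: mpow_Suc matrix_matrix_mult_def)
qed

context
  fixes P :: "'s::finite \<Rightarrow> 's pmf" and R :: "'s \<Rightarrow> nat pmf"
begin

abbreviation "HH2 \<equiv> h P R"
abbreviation "EE \<equiv> extinction_matrix P R"

lemma mpow_le_E_bound:
  assumes "\<And>i j. 0 \<le> A$i$j" "\<And>i j. A$i$j \<le> EE$i$j"
  shows "\<bar>mpow A n $ i $ j\<bar> \<le> 1"
proof -
  have "0 \<le> mpow A n $i$j \<and> mpow A n $i$j \<le> mpow EE n $i$j"
    by (rule mpow_mono[OF assms])
  moreover have "mpow EE n $i$j \<le> 1" by (simp add: mpow_E Hinf_le1)
  ultimately show ?thesis by auto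
qed

lemma genf_mono:
  assumes "\<And>i j. 0 \<le> A$i$j" "\<And>i j. A$i$j \<le> B$i$j" "\<And>i j. B$i$j \<le> EE$i$j"
  shows "0 \<le> genf P R A $i$j \<and> genf P R A $i$j \<le> genf P R B $i$j"
proof -
  have B0: "0 \<le> B$i$j" for i j using assms(1,2) order_trans by blast
  have A1: "A$i$j \<le> EE$i$j" for i j using assms(2,3) order_trans by blast
  have bA: "\<bar>mpow A n $ k $ j\<bar> \<le> 1" for n k j by (rule mpow_le_E_bound[OF assms(1) A1])
  have bB: "\<bar>mpow B n $ k $ j\<bar> \<le> 1" for n k j by (rule mpow_le_E_bound[OF B0 assms(3)])
  have mAB: "0 \<le> mpow A n $i$j \<and> mpow A n $i$j \<le> mpow B n $i$j" for n i j
    by (rule mpow_mono[OF assms(1,2)])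
  have "0 \<le> (\<Sum>n. \<Sum>k\<in>UNIV. pmf (P i) k * (pmf (R k) n * mpow A n $ k $ j))"
    using mAB by (intro suminf_nonneg genf_summ bA sum_nonneg mult_nonneg_nonneg) auto
  moreover have "(\<Sum>n. \<Sum>k\<in>UNIV. pmf (P i) k * (pmf (R k) n * mpow A n $ k $ j)) \<le>
      (\<Sum>n. \<Sum>k\<in>UNIV. pmf (P i) k * (pmf (R k) n * mpow B n $ k $ j))"
    using mAB by (intro suminf_le genf_summ bA bB sum_mono mult_left_mono) auto
  ultimately show ?thesis by (simp add: genf_entry)
qed

lemma HH_le_mpow:
  assumes "\<And>i j. 0 \<le> A$i$j" "\<And>i j. HH2 t 1 i j \<le> A$i$j"
  shows "HH2 t m i j \<le> mpow A m $i$j"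
proof (induction m arbitrary: i j)
  case 0
  then show ?case by (simp add: mpow_0 mat_def h_0)
next
  case (Suc m)
  have mA0: "0 \<le> mpow A m $ i $ l" for l using mpow_mono[of A A m i l] assms by auto
  have "HH2 t (m + 1) i j \<le> (\<Sum>l\<in>UNIV. HH2 t m i l * HH2 t 1 l j)" by (rule H_sub)
  also have "\<dots> \<le> (\<Sum>l\<in>UNIV. mpow A m $ i $ l * A $ l $ j)"
    using Suc.IH assms mA0 by (intro sum_mono mult_mono h_nonneg) (auto intro: order_trans h_nonneg)
  finally show ?case by (simp add: mpow_Suc matrix_matrix_mult_def)
qed

lemma iterate_bounds:
  assumes "\<And>i j. 0 \<le> M$i$j" "\<And>i j. M$i$j \<le> EE$i$j"
  shows "0 \<le> (genf P R ^^ k) M $i$j \<and> (genf P R ^^ k) M $i$j \<le> EE$i$j \<and> HH2 k 1 i j \<le> (genf P R ^^ k) M $i$j"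
proof (induction k arbitrary: i j)
  case 0
  then show ?case using assms h_Suc_0[of P R 0 i j] by simp
next
  case (Suc k)
  let ?F = "(genf P R ^^ k) M"
  have F0: "\<And>i j. 0 \<le> ?F$i$j" and FE: "\<And>i j. ?F$i$j \<le> EE$i$j" and HF: "\<And>i j. HH2 k 1 i j \<le> ?F$i$j"
    using Suc.IH by auto
  have "0 \<le> genf P R ?F $i$j \<and> genf P R ?F $i$j \<le> genf P R EE $i$j"
    by (rule genf_mono[OF F0 FE]) simp
  then have up: "0 \<le> genf P R ?F $i$j \<and> genf P R ?F $i$j \<le> EE $i$j"
    by (simp add: genf_E)
  have bF: "\<bar>mpow ?F n $ k' $ j\<bar> \<le> 1" for n k' j by (rule mpow_le_E_bound[OF F0 FE])
  have "HH2 (Suc k) 1 i j = (\<Sum>k'\<in>UNIV. pmf (P i) k' * (\<Sum>m. pmf (R k') m * HH2 k m k' j))"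
    using h_Suc_Suc[of P R k 0 i j] by simp
  also have "\<dots> \<le> (\<Sum>k'\<in>UNIV. pmf (P i) k' * (\<Sum>m. pmf (R k') m * mpow ?F m $ k' $ j))"
  proof -
    have "(\<Sum>m. pmf (R k') m * HH2 k m k' j) \<le> (\<Sum>m. pmf (R k') m * mpow ?F m $ k' $ j)" for k'
      by (intro suminf_le summable_pmf_bounded[where C=1] H_abs bF mult_left_mono HH_le_mpow F0 HF) auto
    then show ?thesis by (intro sum_mono mult_left_mono) auto
  qed
  also have "\<dots> = genf P R ?F $ i $ j"
    by (simp add: genf_entry swap_sum[where X="\<lambda>n k'. mpow ?F n $ k' $ j", OF bF])
  finally show ?case using up by simp
qed

lemma iterate_lim:
  assumes "\<And>i j. 0 \<le> M$i$j \<and> M$i$j \<le> EE$i$j"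
  shows "(\<lambda>k. (genf P R ^^ k) M) \<longlonglongrightarrow> EE"
proof (intro vec_tendstoI)
  fix i j
  have b: "\<And>k. 0 \<le> (genf P R ^^ k) M $i$j \<and> (genf P R ^^ k) M $i$j \<le> EE$i$j \<and> HH2 k 1 i j \<le> (genf P R ^^ k) M $i$j"
    by (rule iterate_bounds) (use assms in auto)
  have L: "(\<lambda>k. HH2 k 1 i j) \<longlonglongrightarrow> EE $ i $ j"
    unfolding E_entry by (rule H_lim)
  show "(\<lambda>k. (genf P R ^^ k) M $ i $ j) \<longlonglongrightarrow> EE $ i $ j"
    by (rule tendsto_sandwich[OF _ _ L tendsto_const]) (use b in auto)
qed

end

theorem theorem1p4:
  fixes P :: "'s::finite \<Rightarrow> 's pmf" and R :: "'s \<Rightarrow> nat pmf"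
  assumes "irreducible_chain P"
  shows "(\<forall>n\<ge>1. \<forall>i j. mpow (extinction_matrix P R) n $ i $ j = halt_prob P R n i j)
    \<and> genf P R (extinction_matrix P R) = extinction_matrix P R
    \<and> (\<forall>M :: real^'s^'s. (\<forall>i j. 0 \<le> M $ i $ j \<and> M $ i $ j \<le> extinction_matrix P R $ i $ j)
         \<longrightarrow> (\<lambda>k. (genf P R ^^ k) M) \<longlonglongrightarrow> extinction_matrix P R)"
proof (intro conjI allI impI)
  fix n i j assume "(n::nat) \<ge> 1"
  show "mpow (extinction_matrix P R) n $ i $ j = halt_prob P R n i j"
    by (simp add: mpow_E halt_prob_Hinf)
next
  show "genf P R (extinction_matrix P R) = extinction_matrix P R" by (rule genf_E)
next
  fix M :: "real^'s^'s"
  assume "\<forall>i j. 0 \<le> M $ i $ j \<and> M $ i $ j \<le> extinction_matrix P R $ i $ j"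
  then show "(\<lambda>k. (genf P R ^^ k) M) \<longlonglongrightarrow> extinction_matrix P R"
    by (intro iterate_lim) auto
qed

end
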